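(* Fix $1<p<\infty$. Fix natural numbers $l_1,\dots,l_{d+1}$, let $L=\prod_{i=1}^{d+1}l_i$ and let $T=\bigcup_{i=0}^{d+1}\Lambda_i$ be an $(l_1,\dots,l_{d+1})$ interval tree. Suppose $0<\Delta,\nu<1$, $\lambda>0$, $\Theta>0$, $M>1$, and $(r_I)_{I\in T},(s_I)_{I\in T}\subset[0,\infty)$ are such that (i) for each $I\in T$, $r_I\le\lambda s_I$; (ii) for each $I\in T\setminus\Lambda_{d+1}$, $r_I\le\sum_{J^-=I}r_J$ and $s_I\le\sum_{J^-=I}s_J$; (iii) for all $0\le j\le d$, $\max_{I\in\Lambda_j}s_I\le M\min_{I\in\Lambda_j}s_I$; (iv) $\Delta M^p\le\nu\Theta^p/(2\lambda^p)$; (v) $r_{[L]}^p>(1-\nu/2)\Theta^p\bigl(\prod_{i=1}^{d+1}l_i^{p-1}\bigr)\sum_{I\in\Lambda_{d+1}}s_I^p$. Then for any $0\le j<d$, $\bigl|\{I\in\Lambda_j: r_I^p\le(1-\nu)l_{j+1}^{p-1}\Theta^p\sum_{J^-=I}s_J^p\}\bigr|<(1-\Delta)|\Lambda_j|$.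
   Context: $[n]=\{1,\dots,n\}$. Given natural numbers $l_1,\dots,l_{k}$ with $L=\prod_{j=1}^{k}l_j$, an $(l_1,\dots,l_k)$ interval tree $T=\bigcup_{i=0}^k\Lambda_i$ is built as follows: $\Lambda_0=\{[L]\}$; if $\Lambda_i$ ($i<k$) consists of pairwise disjoint integer subintervals of $[L]$ each of cardinality $\prod_{j=i+1}^k l_j$, then each $I\in\Lambda_i$ is partitioned into $l_{i+1}$ integer subintervals of equal cardinality, and $\Lambda_{i+1}$ is the set of all these subintervals over all $I\in\Lambda_i$. For $0<j\le k$ and $J\in\Lambda_j$, $J^-$ denotes the unique $I\in\Lambda_{j-1}$ with $J\subset I$; sums $\sum_{J^-=I}$ range over the children of $I$. *)

theory Defs
  imports Complex_Main
begin

text \<open>The parameters are given by a function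
  l :: nat => nat, of which only l 1, ..., l k matter.  Level i consists of the
  consecutive integer intervals of [L] = {1..L} of cardinality
  l (i+1) * ... * l k; there are l 1 * ... * l i of them.  This is exactly the
  result of the recursive equal-size splitting described in the paper.\<close>

definition blk :: "(nat \<Rightarrow> nat) \<Rightarrow> nat \<Rightarrow> nat \<Rightarrow> nat" where
  "blk l k i = (\<Prod>j\<in>{i+1..k}. l j)"

definition Lambda :: "(nat \<Rightarrow> nat) \<Rightarrow> nat \<Rightarrow> nat \<Rightarrow> nat set set" where
  "Lambda l k i = {{a * blk l k i + 1 .. (a + 1) * blk l k i} | a. a < (\<Prod>j\<in>{1..i}. l j)}"

definition interval_tree :: "(nat \<Rightarrow> nat) \<Rightarrow> nat \<Rightarrow> nat set set" where
  "interval_tree l k = (\<Union>i\<in>{0..k}. Lambda l k i)"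

text \<open>Children of an interval I of level i: the J in level i+1 with J^- = I.\<close>
definition children :: "(nat \<Rightarrow> nat) \<Rightarrow> nat \<Rightarrow> nat \<Rightarrow> nat set \<Rightarrow> nat set set" where
  "children l k i I = {J \<in> Lambda l k (Suc i). J \<subseteq> I}"

end

theory Submission imports Defs "HOL-Analysis.Analysis" begin

lemma power_mean:
  fixes x :: "'a \<Rightarrow> real"
  assumes fin: "finite A" and nn: "\<forall>a\<in>A. 0 \<le> x a" and p: "1 \<le> p"
  shows "(\<Sum>a\<in>A. x a) powr p \<le> real (card A) powr (p-1) * (\<Sum>a\<in>A. x a powr p)"
proof -
  define A' where "A' = {a\<in>A. x a > 0}"
  have finA': "finite A'" using fin A'_def by auto
  have sA: "(\<Sum>a\<in>A. x a) = (\<Sum>a\<in>A'. x a)"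
    by (rule sum.mono_neutral_right[OF fin]) (use nn A'_def in auto)
  have sAp: "(\<Sum>a\<in>A. x a powr p) = (\<Sum>a\<in>A'. x a powr p)"
    by (rule sum.mono_neutral_right[OF fin]) (use nn A'_def in auto)
  have nnp: "0 \<le> (\<Sum>a\<in>A. x a powr p)" by (intro sum_nonneg) auto
  show ?thesis
  proof (cases "A' = {}")
    case True
    then show ?thesis using sA nnp by simp
  next
    case False
    define n where "n = real (card A')"
    have npos: "n > 0" using False finA' n_def by (simp add: card_gt_0_iff)
    have "(\<lambda>x. x powr p) (\<Sum>a\<in>A'. (1/n) *\<^sub>R x a) \<le> (\<Sum>a\<in>A'. (1/n) * (\<lambda>x. x powr p) (x a))"
      by (rule convex_on_sum[OF finA' False powr_convex[OF p]]) (use npos n_def A'_def in auto)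
    hence "((\<Sum>a\<in>A'. x a) / n) powr p \<le> (\<Sum>a\<in>A'. x a powr p) / n"
      by (simp add: sum_divide_distrib[symmetric] sum_distrib_left[symmetric] divide_inverse mult.commute)
    moreover have "0 \<le> (\<Sum>a\<in>A'. x a)" using A'_def by (intro sum_nonneg) auto
    ultimately have "(\<Sum>a\<in>A'. x a) powr p / n powr p \<le> (\<Sum>a\<in>A'. x a powr p) / n"
      using npos by (simp add: powr_divide)
    hence "(\<Sum>a\<in>A'. x a) powr p \<le> n powr p / n * (\<Sum>a\<in>A'. x a powr p)"
      using npos by (simp add: field_simps)
    also have "n powr p / n = n powr (p-1)" using npos by (simp add: powr_diff)
    also have "n powr (p-1) \<le> real (card A) powr (p-1)"
      using npos p n_def A'_def fin by (intro powr_mono2) (auto intro: card_mono)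
    finally show ?thesis using sA sAp nnp
      by (smt (verit) mult_right_mono)
  qed
qed


lemma prod_split_ivl:
  fixes f :: "nat \<Rightarrow> 'b::comm_monoid_mult"
  assumes "a \<le> b" "b \<le> c"
  shows "prod f {Suc a..c} = prod f {Suc a..b} * prod f {Suc b..c}"
proof -
  have "{Suc a..c} = {Suc a..b} \<union> {Suc b..c}" using assms by auto
  moreover have "{Suc a..b} \<inter> {Suc b..c} = {}" by auto
  ultimately show ?thesis by (simp add: prod.union_disjoint)
qed

definition iv :: "(nat \<Rightarrow> nat) \<Rightarrow> nat \<Rightarrow> nat \<Rightarrow> nat \<Rightarrow> nat set" where
  "iv l k i a = {a * blk l k i + 1 .. (a+1) * blk l k i}"

locale tree =
  fixes l :: "nat \<Rightarrow> nat" and k :: nat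
  assumes lpos: "\<forall>i\<in>{1..k}. 0 < l i"
begin

abbreviation "P i \<equiv> prod l {1..i}"

lemma blk_pos: "i \<le> k \<Longrightarrow> blk l k i > 0"
  unfolding blk_def using lpos by (intro prod_pos) auto

lemma P_pos: "i \<le> k \<Longrightarrow> P i > 0"
  using lpos by (intro prod_pos) auto

lemma blk_Suc: "i < k \<Longrightarrow> blk l k i = l (Suc i) * blk l k (Suc i)"
  unfolding blk_def using prod_split_ivl[of i "Suc i" k l] by simp

lemma P_Suc: "P (Suc i) = P i * l (Suc i)"
  using prod_split_ivl[of 0 i "Suc i" l] by simp

lemma Lambda_iv: "Lambda l k i = iv l k i ` {..<P i}"
  unfolding Lambda_def iv_def by auto

lemma iv_inj: assumes "i \<le> k" shows "inj (iv l k i)"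
proof (rule injI)
  fix a b assume eq: "iv l k i a = iv l k i b"
  define B where "B = blk l k i"
  have B: "B > 0" using blk_pos assms B_def by auto
  have "a * B + 1 \<in> iv l k i b" using eq B unfolding iv_def B_def[symmetric] by auto
  hence "b * B \<le> a * B" unfolding iv_def B_def[symmetric] by auto
  hence 1: "b \<le> a" using B by simp
  have "b * B + 1 \<in> iv l k i a" using eq B unfolding iv_def B_def[symmetric] by auto
  hence "a * B \<le> b * B" unfolding iv_def B_def[symmetric] by auto
  hence "a \<le> b" using B by simp
  with 1 show "a = b" by simp
qed

lemma finite_Lambda: "finite (Lambda l k i)"
  unfolding Lambda_iv by simp

lemma card_Lambda: "i \<le> k \<Longrightarrow> card (Lambda l k i) = P i"
  unfolding Lambda_iv by (simp add: card_image[OF inj_on_subset[OF iv_inj subset_UNIV]])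

lemma Lambda_sum: "i \<le> k \<Longrightarrow> (\<Sum>I\<in>Lambda l k i. f I) = (\<Sum>a<P i. f (iv l k i a))"
  unfolding Lambda_iv by (simp add: sum.reindex[OF inj_on_subset[OF iv_inj subset_UNIV]])

lemma iv_sub_iff:
  assumes "j < k"
  shows "iv l k (Suc j) b \<subseteq> iv l k j a \<longleftrightarrow> a * l (Suc j) \<le> b \<and> b < a * l (Suc j) + l (Suc j)"
proof -
  define B where "B = blk l k (Suc j)"
  define m where "m = l (Suc j)"
  have B: "B > 0" using blk_pos assms B_def by auto
  have bj: "blk l k j = m * B" using blk_Suc assms B_def m_def by simp
  have "iv l k (Suc j) b \<subseteq> iv l k j a \<longleftrightarrow> a * (m*B) + 1 \<le> b * B + 1 \<and> (b+1) * B \<le> (a+1) * (m*B)"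
    unfolding iv_def bj B_def[symmetric] using B by (subst atLeastatMost_subset_iff) auto
  also have "\<dots> \<longleftrightarrow> (a*m) * B \<le> b * B \<and> (b+1) * B \<le> ((a+1)*m) * B"
    by (simp add: algebra_simps)
  also have "\<dots> \<longleftrightarrow> a*m \<le> b \<and> b + 1 \<le> (a+1)*m" using B by (simp only: mult_le_cancel2) auto
  also have "\<dots> \<longleftrightarrow> a*m \<le> b \<and> b < a*m + m" by auto
  finally show ?thesis unfolding m_def .
qed

lemma children_iv:
  assumes "j < k" "a < P j"
  shows "children l k j (iv l k j a) = iv l k (Suc j) ` {a * l (Suc j) ..< a * l (Suc j) + l (Suc j)}"
proof -
  have "b < P (Suc j)" if "b < a * l (Suc j) + l (Suc j)" for b
  proof -
    have "a * l (Suc j) + l (Suc j) = (a+1) * l (Suc j)" by simp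
    also have "\<dots> \<le> P j * l (Suc j)" using assms by (intro mult_right_mono) auto
    finally show ?thesis using that P_Suc by simp
  qed
  hence "{b \<in> {..<P (Suc j)}. iv l k (Suc j) b \<subseteq> iv l k j a} = {a * l (Suc j) ..< a * l (Suc j) + l (Suc j)}"
    using iv_sub_iff[OF assms(1)] by auto
  moreover have "children l k j (iv l k j a) = iv l k (Suc j) ` {b \<in> {..<P (Suc j)}. iv l k (Suc j) b \<subseteq> iv l k j a}"
    unfolding children_def Lambda_iv by blast
  ultimately show ?thesis by simp
qed

lemma children_sum:
  assumes "j < k"
  shows "(\<Sum>I\<in>Lambda l k j. \<Sum>J\<in>children l k j I. f J) = (\<Sum>J\<in>Lambda l k (Suc j). f J)"
proof -
  have inj: "inj (iv l k (Suc j))" using iv_inj assms by simp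
  have "(\<Sum>I\<in>Lambda l k j. \<Sum>J\<in>children l k j I. f J)
      = (\<Sum>a<P j. \<Sum>J\<in>children l k j (iv l k j a). f J)" using assms by (simp add: Lambda_sum)
  also have "\<dots> = (\<Sum>a<P j. \<Sum>b\<in>{a * l (Suc j) ..< a * l (Suc j) + l (Suc j)}. f (iv l k (Suc j) b))"
    using assms children_iv inj by (intro sum.cong refl) (simp add: sum.reindex inj_on_subset)
  also have "\<dots> = (\<Sum>b<P j * l (Suc j). f (iv l k (Suc j) b))" by (rule sum.nat_group)
  also have "\<dots> = (\<Sum>J\<in>Lambda l k (Suc j). f J)" using assms P_Suc by (simp add: Lambda_sum)
  finally show ?thesis .
qed

lemma children_card:
  assumes "j < k" "I \<in> Lambda l k j"
  shows "card (children l k j I) = l (Suc j)"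
proof -
  obtain a where a: "a < P j" "I = iv l k j a" using assms(2) Lambda_iv by auto
  show ?thesis using children_iv[OF assms(1) a(1)] a assms(1)
    by (simp add: card_image[OF inj_on_subset[OF iv_inj subset_UNIV]])
qed

lemma children_sub: "children l k j I \<subseteq> Lambda l k (Suc j)"
  unfolding children_def by auto

lemma finite_children: "finite (children l k j I)"
  using finite_subset[OF children_sub finite_Lambda] .


lemma Lambda_tree: "i \<le> k \<Longrightarrow> I \<in> Lambda l k i \<Longrightarrow> I \<in> interval_tree l k"
  unfolding interval_tree_def by auto

lemma step:
  fixes x :: "nat set \<Rightarrow> real"
  assumes j: "j < k" and p: "1 \<le> p"
    and nn: "\<forall>I\<in>Lambda l k (Suc j). 0 \<le> x I"
    and nn0: "\<forall>I\<in>Lambda l k j. 0 \<le> x I"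
    and sub: "\<forall>I\<in>Lambda l k j. x I \<le> (\<Sum>J\<in>children l k j I. x J)"
  shows "(\<Sum>I\<in>Lambda l k j. x I powr p) \<le> real (l (Suc j)) powr (p-1) * (\<Sum>J\<in>Lambda l k (Suc j). x J powr p)"
proof -
  have each: "x I powr p \<le> real (l (Suc j)) powr (p-1) * (\<Sum>J\<in>children l k j I. x J powr p)"
    if I: "I \<in> Lambda l k j" for I
  proof -
    have True: "0 \<le> x I" using nn0 I by auto
    have "x I powr p \<le> (\<Sum>J\<in>children l k j I. x J) powr p"
      using True sub I p by (intro powr_mono2) auto
    also have "\<dots> \<le> real (card (children l k j I)) powr (p-1) * (\<Sum>J\<in>children l k j I. x J powr p)"
      using nn children_sub p by (intro power_mean finite_children) auto
    finally show ?thesis using children_card[OF j I] by simp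
  qed
  have "(\<Sum>I\<in>Lambda l k j. x I powr p) \<le> (\<Sum>I\<in>Lambda l k j. real (l (Suc j)) powr (p-1) * (\<Sum>J\<in>children l k j I. x J powr p))"
    by (rule sum_mono) (rule each)
  also have "\<dots> = real (l (Suc j)) powr (p-1) * (\<Sum>J\<in>Lambda l k (Suc j). x J powr p)"
    by (simp add: sum_distrib_left[symmetric] children_sum[OF j])
  finally show ?thesis .
qed

lemma propag:
  fixes x :: "nat set \<Rightarrow> real"
  assumes p: "1 \<le> p"
    and nn: "\<forall>i\<le>k. \<forall>I\<in>Lambda l k i. 0 \<le> x I"
    and sub: "\<forall>i<k. \<forall>I\<in>Lambda l k i. x I \<le> (\<Sum>J\<in>children l k i I. x J)"
    and jj: "j \<le> j'" and jk: "j' \<le> k"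
  shows "(\<Sum>I\<in>Lambda l k j. x I powr p) \<le> (\<Prod>i\<in>{Suc j..j'}. real (l i) powr (p-1)) * (\<Sum>I\<in>Lambda l k j'. x I powr p)"
  using jj jk
proof (induction j' rule: dec_induct)
  case base
  then show ?case by simp
next
  case (step n)
  have IH: "(\<Sum>I\<in>Lambda l k j. x I powr p) \<le> (\<Prod>i\<in>{Suc j..n}. real (l i) powr (p-1)) * (\<Sum>I\<in>Lambda l k n. x I powr p)"
    using step by simp
  have st: "(\<Sum>I\<in>Lambda l k n. x I powr p) \<le> real (l (Suc n)) powr (p-1) * (\<Sum>J\<in>Lambda l k (Suc n). x J powr p)"
    using step.prems nn sub p by (intro tree.step) (auto simp: tree_axioms dest: Suc_leD)
  have "(\<Sum>I\<in>Lambda l k j. x I powr p) \<le> (\<Prod>i\<in>{Suc j..n}. real (l i) powr (p-1)) * (real (l (Suc n)) powr (p-1) * (\<Sum>J\<in>Lambda l k (Suc n). x J powr p))"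
  proof -
    have "0 \<le> (\<Prod>i\<in>{Suc j..n}. real (l i) powr (p-1))" by (intro prod_nonneg) auto
    from mult_left_mono[OF st this] IH show ?thesis by linarith
  qed
  also have "\<dots> = (\<Prod>i\<in>{Suc j..Suc n}. real (l i) powr (p-1)) * (\<Sum>J\<in>Lambda l k (Suc n). x J powr p)"
    using prod_split_ivl[of j n "Suc n" "\<lambda>i. real (l i) powr (p-1)"] step.hyps by simp
  finally show ?case .
qed

end
theorem lemma3p6:
  fixes p \<Delta> \<nu> lam \<Theta> M :: real
    and l :: "nat \<Rightarrow> nat" and d :: nat
    and r s :: "nat set \<Rightarrow> real"
  assumes p: "1 < p"
    and l_pos: "\<forall>i\<in>{1..d+1}. 0 < l i"
    and \<Delta>: "0 < \<Delta>" "\<Delta> < 1"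
    and \<nu>: "0 < \<nu>" "\<nu> < 1"
    and lam: "lam > 0" and \<Theta>: "\<Theta> > 0" and M: "M > 1"
    and r_nonneg: "\<forall>I\<in>interval_tree l (d+1). 0 \<le> r I"
    and s_nonneg: "\<forall>I\<in>interval_tree l (d+1). 0 \<le> s I"
    and i: "\<forall>I\<in>interval_tree l (d+1). r I \<le> lam * s I"
    and ii: "\<forall>j<d+1. \<forall>I\<in>Lambda l (d+1) j.
               r I \<le> (\<Sum>J\<in>children l (d+1) j I. r J) \<and>
               s I \<le> (\<Sum>J\<in>children l (d+1) j I. s J)"
    and iii: "\<forall>j\<le>d. Max (s ` Lambda l (d+1) j) \<le> M * Min (s ` Lambda l (d+1) j)"
    and iv: "\<Delta> * M powr p \<le> \<nu> * \<Theta> powr p / (2 * lam powr p)"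
    and v: "r {1..(\<Prod>i\<in>{1..d+1}. l i)} powr p >
            (1 - \<nu> / 2) * \<Theta> powr p * (\<Prod>i\<in>{1..d+1}. real (l i) powr (p - 1))
              * (\<Sum>I\<in>Lambda l (d+1) (d+1). s I powr p)"
  shows "\<forall>j<d. real (card {I \<in> Lambda l (d+1) j.
              r I powr p \<le> (1 - \<nu>) * real (l (j+1)) powr (p - 1) * \<Theta> powr p
                 * (\<Sum>J\<in>children l (d+1) j I. s J powr p)})
           < (1 - \<Delta>) * real (card (Lambda l (d+1) j))"
proof (intro allI impI)
  fix j assume jd0: "j < d"
  have jle: "j \<le> Suc d" using jd0 by simp
  note jd = jd0 jle
  interpret tree l "d+1" using l_pos by unfold_locales
  have p1: "1 \<le> p" using p by simp
  let ?L = "Lambda l (d+1)"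
  define c where "c = (1 - \<nu>) * real (l (j+1)) powr (p - 1) * \<Theta> powr p"
  define Bad where "Bad = {I \<in> ?L j. r I powr p \<le> c * (\<Sum>J\<in>children l (d+1) j I. s J powr p)}"
  define G where "G = ?L j - Bad"
  define S where "S = (\<Sum>I\<in>?L (d+1). s I powr p)"
  define Q where "Q a b = (\<Prod>i\<in>{Suc a..b}. real (l i) powr (p-1))" for a b
  define Lp where "Lp = real (l (Suc j)) powr (p-1)"
  have Qnn: "0 \<le> Q a b" for a b unfolding Q_def by (intro prod_nonneg) auto
  have rnn: "\<forall>i\<le>d+1. \<forall>I\<in>?L i. 0 \<le> r I" using r_nonneg Lambda_tree by blast
  have snn: "\<forall>i\<le>d+1. \<forall>I\<in>?L i. 0 \<le> s I" using s_nonneg Lambda_tree by blast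
  have rsub: "\<forall>i<d+1. \<forall>I\<in>?L i. r I \<le> (\<Sum>J\<in>children l (d+1) i I. r J)" using ii by blast
  have ssub: "\<forall>i<d+1. \<forall>I\<in>?L i. s I \<le> (\<Sum>J\<in>children l (d+1) i I. s J)" using ii by blast
  have L0: "?L 0 = {{1..(\<Prod>i\<in>{1..d+1}. l i)}}"
    unfolding Lambda_iv by (simp add: iv_def blk_def lessThan_Suc)
  have F1: "r {1..(\<Prod>i\<in>{1..d+1}. l i)} powr p \<le> Q 0 j * (\<Sum>I\<in>?L j. r I powr p)"
    using propag[OF p1 rnn rsub, of 0 j] jd L0 unfolding Q_def by simp
  have F2: "(\<Sum>I\<in>?L (Suc j). s I powr p) \<le> Q (Suc j) (d+1) * S"
    using propag[OF p1 snn ssub, of "Suc j" "d+1"] jd unfolding Q_def S_def by simp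
  have F3: "(\<Sum>I\<in>?L j. s I powr p) \<le> Q j (d+1) * S"
    using propag[OF p1 snn ssub, of j "d+1"] jd unfolding Q_def S_def by simp
  have F4: "Q j (d+1) = Lp * Q (Suc j) (d+1)"
    using prod_split_ivl[of j "Suc j" "d+1" "\<lambda>i. real (l i) powr (p-1)"] jd unfolding Q_def Lp_def by simp
  have F5: "Q 0 (d+1) = Q 0 j * Q j (d+1)"
    using prod_split_ivl[of 0 j "d+1" "\<lambda>i. real (l i) powr (p-1)"] jd unfolding Q_def by simp
  have Snn: "0 \<le> S" unfolding S_def by (intro sum_nonneg) auto
  have finL: "finite (?L j)" by (rule finite_Lambda)
  have BadL: "Bad \<subseteq> ?L j" unfolding Bad_def by auto
  have cnn: "0 \<le> c" unfolding c_def using \<nu> by auto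
  show "real (card {I \<in> ?L j. r I powr p \<le> (1 - \<nu>) * real (l (j+1)) powr (p - 1) * \<Theta> powr p
                 * (\<Sum>J\<in>children l (d+1) j I. s J powr p)}) < (1 - \<Delta>) * real (card (?L j))"
    unfolding c_def[symmetric] Bad_def[symmetric]
  proof (rule ccontr)
    assume "\<not> real (card Bad) < (1 - \<Delta>) * real (card (?L j))"
    hence cB: "(1 - \<Delta>) * real (card (?L j)) \<le> real (card Bad)" by simp
    have cG: "real (card G) \<le> \<Delta> * real (card (?L j))"
    proof -
      have "card G = card (?L j) - card Bad" unfolding G_def using BadL finL by (simp add: card_Diff_subset finite_subset)
      moreover have "card Bad \<le> card (?L j)" using BadL finL by (simp add: card_mono)
      ultimately have "real (card G) = real (card (?L j)) - real (card Bad)" by simp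
      then show ?thesis using cB by (simp add: algebra_simps)
    qed
    have "(\<Sum>I\<in>Bad. r I powr p) \<le> (\<Sum>I\<in>Bad. c * (\<Sum>J\<in>children l (d+1) j I. s J powr p))"
      by (rule sum_mono) (simp add: Bad_def)
    also have "\<dots> = c * (\<Sum>I\<in>Bad. (\<Sum>J\<in>children l (d+1) j I. s J powr p))"
      by (simp add: sum_distrib_left)
    also have "\<dots> \<le> c * (\<Sum>I\<in>?L j. (\<Sum>J\<in>children l (d+1) j I. s J powr p))"
      using cnn BadL finL by (intro mult_left_mono sum_mono2) (auto intro: sum_nonneg)
    also have "\<dots> = c * (\<Sum>I\<in>?L (Suc j). s I powr p)"
      using children_sum[of j "\<lambda>J. s J powr p"] jd by simp
    also have "\<dots> \<le> c * (Q (Suc j) (d+1) * S)"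
      using F2 cnn by (intro mult_left_mono) auto
    finally have PB: "(\<Sum>I\<in>Bad. r I powr p) \<le> c * (Q (Suc j) (d+1) * S)" .
    define Mx where "Mx = Max (s ` ?L j)"
    define Mn where "Mn = Min (s ` ?L j)"
    have "card (?L j) > 0" using card_Lambda[of j] P_pos[of j] jd by simp
    hence Lne: "?L j \<noteq> {}" by auto
    have sMx: "s I \<le> Mx" if "I \<in> ?L j" for I unfolding Mx_def using that finL by simp
    have sMn: "Mn \<le> s I" if "I \<in> ?L j" for I unfolding Mn_def using that finL by simp
    have Mnnn: "0 \<le> Mn"
    proof -
      have "Mn \<in> s ` ?L j" unfolding Mn_def using finL Lne by (intro Min_in) auto
      then obtain I where "I \<in> ?L j" "Mn = s I" by auto
      moreover have "j \<le> Suc d" using jd by simp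
      ultimately show ?thesis using snn by auto
    qed
    have MxMn: "Mx \<le> M * Mn" using iii jd unfolding Mx_def Mn_def by simp
    have gI: "r I powr p \<le> lam powr p * M powr p * Mn powr p" if I: "I \<in> ?L j" for I
    proof -
      have "r I powr p \<le> (lam * s I) powr p"
        using I i Lambda_tree[of j I] jd r_nonneg p by (intro powr_mono2) auto
      also have "\<dots> \<le> (lam * (M * Mn)) powr p"
        using I s_nonneg Lambda_tree[of j I] jd lam p sMx[OF I] MxMn by (intro powr_mono2 mult_left_mono) auto
      also have "\<dots> = lam powr p * M powr p * Mn powr p"
        using lam M Mnnn by (simp add: powr_mult)
      finally show ?thesis .
    qed
    have "(\<Sum>I\<in>G. r I powr p) \<le> real (card G) * (lam powr p * M powr p * Mn powr p)"
      using gI unfolding G_def by (intro sum_bounded_above) auto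
    also have "\<dots> \<le> (\<Delta> * real (card (?L j))) * (lam powr p * M powr p * Mn powr p)"
      using cG by (intro mult_right_mono) auto
    also have "\<dots> = (\<Delta> * lam powr p * M powr p) * (real (card (?L j)) * Mn powr p)" by simp
    also have "\<dots> \<le> (\<Delta> * lam powr p * M powr p) * (\<Sum>I\<in>?L j. s I powr p)"
    proof -
      have "real (card (?L j)) * Mn powr p \<le> (\<Sum>I\<in>?L j. s I powr p)"
        using sMn Mnnn p by (intro sum_bounded_below) (auto intro: powr_mono2)
      then show ?thesis using \<Delta> by (intro mult_left_mono) auto
    qed
    also have "\<dots> \<le> (\<Delta> * lam powr p * M powr p) * (Q j (d+1) * S)"
      using F3 \<Delta> by (intro mult_left_mono) auto
    also have "\<dots> \<le> (\<nu> * \<Theta> powr p / 2) * (Q j (d+1) * S)"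
    proof -
      have lp: "lam powr p > 0" using lam by simp
      have "\<Delta> * M powr p * lam powr p \<le> \<nu> * \<Theta> powr p / (2 * lam powr p) * lam powr p"
        using iv lp by (intro mult_right_mono) auto
      also have "\<dots> = \<nu> * \<Theta> powr p / 2" using lp by (simp add: field_simps)
      finally have "\<Delta> * lam powr p * M powr p \<le> \<nu> * \<Theta> powr p / 2" by (simp add: mult_ac)
      then show ?thesis using Qnn Snn by (intro mult_right_mono) auto
    qed
    finally have PG: "(\<Sum>I\<in>G. r I powr p) \<le> (\<nu> * \<Theta> powr p / 2) * (Q j (d+1) * S)" .
    have split: "(\<Sum>I\<in>?L j. r I powr p) = (\<Sum>I\<in>Bad. r I powr p) + (\<Sum>I\<in>G. r I powr p)"
      unfolding G_def using BadL finL by (simp add: sum.subset_diff)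
    have "r {1..(\<Prod>i\<in>{1..d+1}. l i)} powr p \<le> Q 0 j * (c * (Q (Suc j) (d+1) * S) + (\<nu> * \<Theta> powr p / 2) * (Q j (d+1) * S))"
      using F1 split PB PG Qnn[of 0 j] by (smt (verit) mult_left_mono)
    also have "\<dots> = (1 - \<nu> / 2) * \<Theta> powr p * Q 0 (d+1) * S"
      unfolding F5 F4 c_def Lp_def by (simp add: algebra_simps)
    finally have "r {1..(\<Prod>i\<in>{1..d+1}. l i)} powr p \<le> (1 - \<nu> / 2) * \<Theta> powr p * Q 0 (d+1) * S" .
    moreover have "Q 0 (d+1) = (\<Prod>i\<in>{1..d+1}. real (l i) powr (p - 1))" unfolding Q_def by simp
    ultimately show False using v unfolding S_def by simp
  qed
qed

end
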